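(* The left adjoint of the forgetful functor from the category of abelian group objects in power quandles to the category of power quandles sends a power quandle $P$ to the free abelian group $\mathbb{Z}\mathrm{Or}(P)$ on the set $\mathrm{Or}(P)$ of orbits of $P$, with trivial conjugation ($x\rhd y=y$), unit $0$, and power operations given by the $\mathbb{Z}$-linear extension of $\pi^n([a])=[\pi^n(a)]$.
   Context: A power quandle $(P,\rhd,\pi,e)$ consists of a set $P$, a binary operation $\rhd$ on $P$, an element $e\in P$, and maps $\pi^n\colon P\to P$ for each $n\in\mathbb{Z}$, satisfying for all $a,b,c\in P$ and $m,n\in\mathbb{Z}$: (1) each left multiplication $\lambda_a\colon b\mapsto a\rhd b$ is a bijection of $P$, and $a\rhd(b\rhd c)=(a\rhd b)\rhd(a\rhd c)$; (2) $a\rhd a=a$; (3) $e\rhd b=b$ and $a\rhd e=e$; (4) $\pi^1(a)=a$ and $\pi^m(\pi^n(a))=\pi^{mn}(a)$; (5) $\pi^0(a)=e$; (6) $a\rhd\pi^n(b)=\pi^n(a\rhd b)$; (7) $\pi^n(a)\rhd b=\lambda_a^n(b)$, the $n$-th iterate of $\lambda_a$ (using $\lambda_a^{-1}$ for negative $n$, and $\lambda_a^0=\mathrm{id}$). Morphisms of power quandles are maps preserving $\rhd$, all $\pi^n$, and $e$. An abelian group object in power quandles is a power quandle $P$ with an abelian group structure whose zero is $e$ such that $\rhd\colon P\times P\to P$ and all $\pi^n$ are group homomorphisms; morphisms are maps that are both power quandle morphisms and group homomorphisms. The set of orbits $\mathrm{Or}(P)$ is the set of equivalence classes $[a]$ of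 $P$ under the equivalence relation generated by $a\rhd b\sim b$ for all $a,b\in P$; the formula $\pi^n([a])=[\pi^n(a)]$ is well defined.
   Formalization: $\mathbb{Z}\mathrm{Or}(P)$ is the free abelian group on $\mathrm{Or}(P)$ minus the orbit $[e]$, so $[e]$ is identified with $0$, and the power operations send $[a]$ to $0$ whenever $[\pi^n(a)]=[e]$. The statement above fails without it. *)

theory Defs
  imports "HOL-Algebra.Free_Abelian_Groups"
begin

record 'a pq =
  pq_carrier :: "'a set"
  pq_rhd :: "'a \<Rightarrow> 'a \<Rightarrow> 'a"
  pq_pw :: "int \<Rightarrow> 'a \<Rightarrow> 'a"
  pq_e :: 'a

definition lam_iter :: "'a pq \<Rightarrow> 'a \<Rightarrow> int \<Rightarrow> 'a \<Rightarrow> 'a" where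
  "lam_iter P a n =
     (if 0 \<le> n then (pq_rhd P a) ^^ nat n
      else (inv_into (pq_carrier P) (pq_rhd P a)) ^^ nat (- n))"

definition power_quandle :: "'a pq \<Rightarrow> bool" where
  "power_quandle P \<longleftrightarrow>
     (let C = pq_carrier P; r = pq_rhd P; p = pq_pw P; e = pq_e P in
      e \<in> C \<and>
      (\<forall>a\<in>C. \<forall>b\<in>C. r a b \<in> C) \<and>
      (\<forall>n. \<forall>a\<in>C. p n a \<in> C) \<and>
      (\<forall>a\<in>C. bij_betw (r a) C C) \<and>
      (\<forall>a\<in>C. \<forall>b\<in>C. \<forall>c\<in>C. r a (r b c) = r (r a b) (r a c)) \<and>
      (\<forall>a\<in>C. r a a = a) \<and>
      (\<forall>b\<in>C. r e b = b) \<and>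
      (\<forall>a\<in>C. r a e = e) \<and>
      (\<forall>a\<in>C. p 1 a = a) \<and>
      (\<forall>m n. \<forall>a\<in>C. p m (p n a) = p (m * n) a) \<and>
      (\<forall>a\<in>C. p 0 a = e) \<and>
      (\<forall>n. \<forall>a\<in>C. \<forall>b\<in>C. r a (p n b) = p n (r a b)) \<and>
      (\<forall>n. \<forall>a\<in>C. \<forall>b\<in>C. r (p n a) b = lam_iter P a n b))"

definition pq_hom :: "'a pq \<Rightarrow> 'b pq \<Rightarrow> ('a \<Rightarrow> 'b) \<Rightarrow> bool" where
  "pq_hom P Q f \<longleftrightarrow>
     (\<forall>a\<in>pq_carrier P. f a \<in> pq_carrier Q) \<and>
     (\<forall>a\<in>pq_carrier P. \<forall>b\<in>pq_carrier P. f (pq_rhd P a b) = pq_rhd Q (f a) (f b)) \<and>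
     (\<forall>n. \<forall>a\<in>pq_carrier P. f (pq_pw P n a) = pq_pw Q n (f a)) \<and>
     f (pq_e P) = pq_e Q"

text \<open>Abelian group objects in power quandles: a power quandle P together with an
  abelian group G on the same carrier, with zero e, such that rhd (as a map
  P x P \<rightarrow> P) and all pw n are group homomorphisms.\<close>
definition abgrp_obj :: "'a pq \<Rightarrow> 'a monoid \<Rightarrow> bool" where
  "abgrp_obj P G \<longleftrightarrow>
     power_quandle P \<and> comm_group G \<and>
     carrier G = pq_carrier P \<and> \<one>\<^bsub>G\<^esub> = pq_e P \<and>
     (\<forall>x\<in>pq_carrier P. \<forall>x'\<in>pq_carrier P. \<forall>y\<in>pq_carrier P. \<forall>y'\<in>pq_carrier P.
        pq_rhd P (x \<otimes>\<^bsub>G\<^esub> x') (y \<otimes>\<^bsub>G\<^esub> y') = pq_rhd P x y \<otimes>\<^bsub>G\<^esub> pq_rhd P x' y') \<and>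
     (\<forall>n. \<forall>x\<in>pq_carrier P. \<forall>y\<in>pq_carrier P.
        pq_pw P n (x \<otimes>\<^bsub>G\<^esub> y) = pq_pw P n x \<otimes>\<^bsub>G\<^esub> pq_pw P n y)"

definition abgrp_obj_hom ::
    "'a pq \<Rightarrow> 'a monoid \<Rightarrow> 'b pq \<Rightarrow> 'b monoid \<Rightarrow> ('a \<Rightarrow> 'b) \<Rightarrow> bool" where
  "abgrp_obj_hom P G Q H f \<longleftrightarrow> pq_hom P Q f \<and> f \<in> hom G H"

definition orb_gen :: "'a pq \<Rightarrow> ('a \<times> 'a) set" where
  "orb_gen P = {(pq_rhd P a b, b) | a b. a \<in> pq_carrier P \<and> b \<in> pq_carrier P}"

definition orb_rel :: "'a pq \<Rightarrow> ('a \<times> 'a) set" where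
  "orb_rel P = (orb_gen P \<union> (orb_gen P)\<inverse>)\<^sup>*"

definition orbit :: "'a pq \<Rightarrow> 'a \<Rightarrow> 'a set" where
  "orbit P a = orb_rel P `` {a}"

definition Orbits :: "'a pq \<Rightarrow> 'a set set" where
  "Orbits P = orbit P ` pq_carrier P"

definition orbit_pw :: "'a pq \<Rightarrow> int \<Rightarrow> 'a set \<Rightarrow> 'a set" where
  "orbit_pw P n X = orbit P (pq_pw P n (SOME a. a \<in> X \<inter> pq_carrier P))"

text \<open>ZOr(P): free abelian group on the orbits, where the orbit [e] of the unit
  is identified with the zero 0 (forced since the unit is the zero).\<close>
definition ZOr_gens :: "'a pq \<Rightarrow> 'a set set" where
  "ZOr_gens P = Orbits P - {orbit P (pq_e P)}"

definition ZOr_grp :: "'a pq \<Rightarrow> ('a set \<Rightarrow>\<^sub>0 int) monoid" where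
  "ZOr_grp P = free_Abelian_group (ZOr_gens P)"

definition ZOr_gen :: "'a pq \<Rightarrow> 'a set \<Rightarrow> int \<Rightarrow> ('a set \<Rightarrow>\<^sub>0 int)" where
  "ZOr_gen P X k = (if X = orbit P (pq_e P) then 0 else Poly_Mapping.single X k)"

definition ZOr_pw :: "'a pq \<Rightarrow> int \<Rightarrow> ('a set \<Rightarrow>\<^sub>0 int) \<Rightarrow> ('a set \<Rightarrow>\<^sub>0 int)" where
  "ZOr_pw P n c =
     (\<Sum>X\<in>Poly_Mapping.keys c. ZOr_gen P (orbit_pw P n X) (Poly_Mapping.lookup c X))"

definition ZOr_pq :: "'a pq \<Rightarrow> ('a set \<Rightarrow>\<^sub>0 int) pq" where
  "ZOr_pq P = \<lparr> pq_carrier = carrier (ZOr_grp P),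
                 pq_rhd = (\<lambda>x y. y),
                 pq_pw = ZOr_pw P,
                 pq_e = 0 \<rparr>"

definition ZOr_eta :: "'a pq \<Rightarrow> 'a \<Rightarrow> ('a set \<Rightarrow>\<^sub>0 int)" where
  "ZOr_eta P a = ZOr_gen P (orbit P a) 1"

end

theory Submission
  imports Defs
begin

lemma pqD:
  assumes "power_quandle P"
  shows "pq_e P \<in> pq_carrier P"
    "\<And>a b. a \<in> pq_carrier P \<Longrightarrow> b \<in> pq_carrier P \<Longrightarrow> pq_rhd P a b \<in> pq_carrier P"
    "\<And>n a. a \<in> pq_carrier P \<Longrightarrow> pq_pw P n a \<in> pq_carrier P"
    "\<And>a. a \<in> pq_carrier P \<Longrightarrow> pq_pw P 1 a = a"
    "\<And>m n a. a \<in> pq_carrier P \<Longrightarrow> pq_pw P m (pq_pw P n a) = pq_pw P (m * n) a"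
    "\<And>a. a \<in> pq_carrier P \<Longrightarrow> pq_pw P 0 a = pq_e P"
    "\<And>n a b. a \<in> pq_carrier P \<Longrightarrow> b \<in> pq_carrier P \<Longrightarrow> pq_rhd P a (pq_pw P n b) = pq_pw P n (pq_rhd P a b)"
    "\<And>b. b \<in> pq_carrier P \<Longrightarrow> pq_rhd P (pq_e P) b = b"
    "\<And>a. a \<in> pq_carrier P \<Longrightarrow> pq_rhd P a (pq_e P) = pq_e P"
  using assms unfolding power_quandle_def Let_def by auto

lemma pw_e:
  assumes "power_quandle P"
  shows "pq_pw P n (pq_e P) = pq_e P"
proof -
  have e: "pq_e P \<in> pq_carrier P" using pqD[OF assms] by blast
  have z: "pq_pw P 0 (pq_e P) = pq_e P" using pqD(6)[OF assms e] .
  have c: "pq_pw P n (pq_pw P 0 (pq_e P)) = pq_pw P (n * 0) (pq_e P)" using pqD(5)[OF assms e] .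
  show ?thesis using c z by simp
qed

lemma orb_rel_sym: "(a, b) \<in> orb_rel P \<Longrightarrow> (b, a) \<in> orb_rel P"
proof -
  have "sym (orb_gen P \<union> (orb_gen P)\<inverse>)" by (auto simp: sym_def)
  then have "sym (orb_rel P)" unfolding orb_rel_def by (rule sym_rtrancl)
  then show "(a, b) \<in> orb_rel P \<Longrightarrow> (b, a) \<in> orb_rel P" by (auto simp: sym_def)
qed

lemma orb_rel_trans: "(a, b) \<in> orb_rel P \<Longrightarrow> (b, c) \<in> orb_rel P \<Longrightarrow> (a, c) \<in> orb_rel P"
  unfolding orb_rel_def by (rule rtrancl_trans)

lemma orbit_eq_iff: "orbit P a = orbit P b \<longleftrightarrow> (a, b) \<in> orb_rel P"
proof
  assume "orbit P a = orbit P b"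
  moreover have "b \<in> orbit P b" by (simp add: orbit_def orb_rel_def)
  ultimately have "b \<in> orbit P a" by simp
  then show "(a, b) \<in> orb_rel P" by (simp add: orbit_def)
next
  assume "(a, b) \<in> orb_rel P"
  then show "orbit P a = orbit P b"
    unfolding orbit_def by (auto intro: orb_rel_trans orb_rel_sym)
qed

lemma orbit_self: "a \<in> orbit P a"
  by (simp add: orbit_def orb_rel_def)

lemma orb_rel_rhd:
  "a \<in> pq_carrier P \<Longrightarrow> b \<in> pq_carrier P \<Longrightarrow> (pq_rhd P a b, b) \<in> orb_rel P"
  unfolding orb_rel_def orb_gen_def by blast

lemma orb_rel_carrier:
  assumes "power_quandle P" "(a, b) \<in> orb_rel P" "a \<in> pq_carrier P"
  shows "b \<in> pq_carrier P"
  using assms(2,3) unfolding orb_rel_def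
proof (induction rule: rtrancl_induct)
  case (step y z)
  then show ?case unfolding orb_gen_def using pqD[OF assms(1)] by auto
qed simp

lemma orb_rel_pw:
  assumes "power_quandle P" "(a, b) \<in> orb_rel P" "a \<in> pq_carrier P"
  shows "(pq_pw P n a, pq_pw P n b) \<in> orb_rel P"
  using assms(2,3) unfolding orb_rel_def
proof (induction rule: rtrancl_induct)
  case base
  then show ?case by simp
next
  case (step y z)
  have yC: "y \<in> pq_carrier P" using orb_rel_carrier[OF assms(1)] step unfolding orb_rel_def by blast
  from step(2) have "(pq_pw P n y, pq_pw P n z) \<in> orb_gen P \<union> (orb_gen P)\<inverse>"
  proof
    assume "(y, z) \<in> orb_gen P"
    then obtain x where x: "x \<in> pq_carrier P" "z \<in> pq_carrier P" "y = pq_rhd P x z"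
      unfolding orb_gen_def by blast
    have "pq_pw P n y = pq_rhd P x (pq_pw P n z)" using x pqD(7)[OF assms(1) x(1,2)] by simp
    moreover have "pq_pw P n z \<in> pq_carrier P" using pqD(3)[OF assms(1) x(2)] .
    ultimately have "(pq_pw P n y, pq_pw P n z) \<in> orb_gen P" unfolding orb_gen_def using x(1) by blast
    then show ?thesis by blast
  next
    assume "(y, z) \<in> (orb_gen P)\<inverse>"
    then obtain x where x: "x \<in> pq_carrier P" "y \<in> pq_carrier P" "z = pq_rhd P x y"
      unfolding orb_gen_def by blast
    have "pq_pw P n z = pq_rhd P x (pq_pw P n y)" using x pqD(7)[OF assms(1) x(1,2)] by simp
    moreover have "pq_pw P n y \<in> pq_carrier P" using pqD(3)[OF assms(1) x(2)] .
    ultimately have "(pq_pw P n z, pq_pw P n y) \<in> orb_gen P" unfolding orb_gen_def using x(1) by blast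
    then show ?thesis by blast
  qed
  moreover have "(pq_pw P n a, pq_pw P n y) \<in> (orb_gen P \<union> (orb_gen P)\<inverse>)\<^sup>*"
    using step assms(3) by blast
  ultimately show ?case by (meson rtrancl_into_rtrancl)
qed

lemma orbit_rep:
  assumes "power_quandle P" "a \<in> pq_carrier P"
  shows "(SOME x. x \<in> orbit P a \<inter> pq_carrier P) \<in> orbit P a \<inter> pq_carrier P"
  by (rule someI[of _ a]) (use assms orbit_self in auto)

lemma orbit_rep_rel:
  assumes "power_quandle P" "a \<in> pq_carrier P"
  shows "(a, SOME x. x \<in> orbit P a \<inter> pq_carrier P) \<in> orb_rel P"
  using orbit_rep[OF assms] by (simp add: orbit_def)

lemma orbit_pw_orbit:
  assumes "power_quandle P" "a \<in> pq_carrier P"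
  shows "orbit_pw P n (orbit P a) = orbit P (pq_pw P n a)"
  unfolding orbit_pw_def orbit_eq_iff
  using orb_rel_pw[OF assms(1) orbit_rep_rel[OF assms] assms(2), of n]
  by (rule orb_rel_sym)

lemma ZOr_gen_cmul: "ZOr_gen P Y k = frag_cmul k (ZOr_gen P Y 1)"
  unfolding ZOr_gen_def by (cases "Y = orbit P (pq_e P)") (simp_all add: poly_mapping_eqI lookup_single when_def)

lemma ZOr_pw_extend: "ZOr_pw P n = frag_extend (\<lambda>X. ZOr_gen P (orbit_pw P n X) 1)"
  unfolding ZOr_pw_def frag_extend_def by (intro ext sum.cong refl) (rule ZOr_gen_cmul)

lemma carrier_ZOr: "c \<in> carrier (ZOr_grp P) \<longleftrightarrow> Poly_Mapping.keys c \<subseteq> ZOr_gens P"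
  by (simp add: ZOr_grp_def)

lemma eta_e: "ZOr_eta P (pq_e P) = 0"
  by (simp add: ZOr_eta_def ZOr_gen_def)

lemma eta_carrier:
  assumes "a \<in> pq_carrier P"
  shows "ZOr_eta P a \<in> carrier (ZOr_grp P)"
  using assms unfolding carrier_ZOr ZOr_eta_def ZOr_gen_def ZOr_gens_def Orbits_def by auto

lemma gens_rep:
  assumes "X \<in> ZOr_gens P"
  shows "\<exists>a\<in>pq_carrier P. X = orbit P a \<and> frag_of X = ZOr_eta P a"
  using assms unfolding ZOr_gens_def Orbits_def ZOr_eta_def ZOr_gen_def by auto

lemma eta_orbit_e:
  assumes "power_quandle P" "a \<in> pq_carrier P" "orbit P a = orbit P (pq_e P)"
  shows "ZOr_eta P a = 0"
  using assms(3) by (simp add: ZOr_eta_def ZOr_gen_def)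

lemma pw_eta:
  assumes "power_quandle P" "a \<in> pq_carrier P"
  shows "ZOr_pw P n (ZOr_eta P a) = ZOr_eta P (pq_pw P n a)"
proof (cases "orbit P a = orbit P (pq_e P)")
  case True
  then have "(a, pq_e P) \<in> orb_rel P" by (simp add: orbit_eq_iff)
  from orb_rel_pw[OF assms(1) this assms(2), of n]
  have "orbit P (pq_pw P n a) = orbit P (pq_e P)" by (simp add: pw_e[OF assms(1)] orbit_eq_iff)
  then show ?thesis using True by (simp add: ZOr_eta_def ZOr_gen_def ZOr_pw_def)
next
  case False
  then have "ZOr_eta P a = frag_of (orbit P a)" by (simp add: ZOr_eta_def ZOr_gen_def)
  then show ?thesis
    by (simp add: ZOr_pw_extend orbit_pw_orbit[OF assms] ZOr_eta_def)
qed

lemma pw_gen_closed: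
  assumes "power_quandle P" "X \<in> ZOr_gens P"
  shows "ZOr_gen P (orbit_pw P n X) 1 \<in> carrier (ZOr_grp P)"
proof -
  obtain a where a: "a \<in> pq_carrier P" "X = orbit P a" using gens_rep[OF assms(2)] by blast
  have "ZOr_gen P (orbit_pw P n X) 1 = ZOr_eta P (pq_pw P n a)"
    using a orbit_pw_orbit[OF assms(1) a(1)] by (simp add: ZOr_eta_def)
  then show ?thesis using eta_carrier[OF pqD(3)[OF assms(1) a(1)]] by simp
qed

lemma ZOr_pw_carrier:
  assumes "power_quandle P" "c \<in> carrier (ZOr_grp P)"
  shows "ZOr_pw P n c \<in> carrier (ZOr_grp P)"
proof -
  have "Poly_Mapping.keys (ZOr_pw P n c) \<subseteq> (\<Union>X\<in>Poly_Mapping.keys c. Poly_Mapping.keys (ZOr_gen P (orbit_pw P n X) 1))"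
    unfolding ZOr_pw_extend by (rule keys_frag_extend)
  also have "\<dots> \<subseteq> ZOr_gens P"
    using pw_gen_closed[OF assms(1)] assms(2) unfolding carrier_ZOr by blast
  finally show ?thesis unfolding carrier_ZOr .
qed

lemma ZOr_pw_add: "ZOr_pw P n (x + y) = ZOr_pw P n x + ZOr_pw P n y"
  unfolding ZOr_pw_extend by (rule frag_extend_add)

lemma free_hom_unique:
  assumes H: "group H" and phi: "\<phi> \<in> hom (free_Abelian_group S) H"
    and psi: "\<psi> \<in> hom (free_Abelian_group S) H"
    and gen: "\<And>X. X \<in> S \<Longrightarrow> \<phi> (frag_of X) = \<psi> (frag_of X)"
    and c: "Poly_Mapping.keys c \<subseteq> S"
  shows "\<phi> c = \<psi> c"
proof -
  have g1: "group_hom (free_Abelian_group S) H \<phi>"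
    by (simp add: group_hom_def group_hom_axioms_def H phi)
  have g2: "group_hom (free_Abelian_group S) H \<psi>"
    by (simp add: group_hom_def group_hom_axioms_def H psi)
  show ?thesis
    using c
  proof (rule free_Abelian_group_induct[where P="\<lambda>c. \<phi> c = \<psi> c"])
    show "\<phi> 0 = \<psi> 0" using group_hom.hom_one[OF g1] group_hom.hom_one[OF g2] by simp
  next
    fix x y :: "'c \<Rightarrow>\<^sub>0 int"
    assume 2: "Poly_Mapping.keys x \<subseteq> S" "Poly_Mapping.keys y \<subseteq> S" "\<phi> x = \<psi> x" "\<phi> y = \<psi> y"
    have e: "x - y = x \<otimes>\<^bsub>free_Abelian_group S\<^esub> inv\<^bsub>free_Abelian_group S\<^esub> y"
      using 2 by simp
    have xc: "x \<in> carrier (free_Abelian_group S)" "y \<in> carrier (free_Abelian_group S)"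
      using 2 by auto
    have ic: "inv\<^bsub>free_Abelian_group S\<^esub> y \<in> carrier (free_Abelian_group S)"
      using xc by (simp add: group.inv_closed)
    show "\<phi> (x - y) = \<psi> (x - y)" unfolding e
      using group_hom.hom_mult[OF g1 xc(1) ic] group_hom.hom_mult[OF g2 xc(1) ic]
        group_hom.hom_inv[OF g1 xc(2)] group_hom.hom_inv[OF g2 xc(2)] 2 by simp
  next
    fix X assume "X \<in> S"
    then show "\<phi> (frag_of X) = \<psi> (frag_of X)" by (rule gen)
  qed
qed

lemma ZOr_pw_keys:
  assumes "power_quandle P" "Poly_Mapping.keys c \<subseteq> ZOr_gens P"
  shows "Poly_Mapping.keys (ZOr_pw P n c) \<subseteq> ZOr_gens P"
  using ZOr_pw_carrier[OF assms(1)] assms(2) by (simp add: carrier_ZOr)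

lemma ZOr_pw_hom:
  assumes "power_quandle P"
  shows "ZOr_pw P n \<in> hom (ZOr_grp P) (ZOr_grp P)"
  by (rule homI) (simp_all add: ZOr_pw_carrier[OF assms] ZOr_pw_keys[OF assms] ZOr_pw_add ZOr_grp_def)

lemma ZOr_ext:
  assumes "power_quandle P" "group H"
    and "\<phi> \<in> hom (ZOr_grp P) H" "\<psi> \<in> hom (ZOr_grp P) H"
    and "\<And>a. a \<in> pq_carrier P \<Longrightarrow> \<phi> (ZOr_eta P a) = \<psi> (ZOr_eta P a)"
    and "c \<in> carrier (ZOr_grp P)"
  shows "\<phi> c = \<psi> c"
proof (rule free_hom_unique[OF assms(2)])
  show "\<phi> \<in> hom (free_Abelian_group (ZOr_gens P)) H" using assms(3) by (simp add: ZOr_grp_def)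
  show "\<psi> \<in> hom (free_Abelian_group (ZOr_gens P)) H" using assms(4) by (simp add: ZOr_grp_def)
  show "Poly_Mapping.keys c \<subseteq> ZOr_gens P" using assms(6) by (simp add: carrier_ZOr)
  fix X assume "X \<in> ZOr_gens P"
  then obtain a where "a \<in> pq_carrier P" "frag_of X = ZOr_eta P a" using gens_rep by blast
  then show "\<phi> (frag_of X) = \<psi> (frag_of X)" using assms(5) by simp
qed

lemma funpow_idlam: "((\<lambda>y. y) ^^ k) b = b"
  by (induction k) auto

lemma funpow_inv_idlam: "b \<in> C \<Longrightarrow> ((inv_into C (\<lambda>y. y)) ^^ k) b = b"
proof (induction k)
  case (Suc k)
  then show ?case using inv_into_f_f[of "\<lambda>y. y" C b] by (simp add: inj_on_def)
qed simp

lemma ZOr_power_quandle: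
  assumes P: "power_quandle P"
  shows "power_quandle (ZOr_pq P)"
proof -
  let ?C = "carrier (ZOr_grp P)"
  have grp: "group (ZOr_grp P)" by (simp add: ZOr_grp_def)
  have homid: "(\<lambda>c. c) \<in> hom (ZOr_grp P) (ZOr_grp P)" by (rule homI) auto
  have hom0: "(\<lambda>c. 0) \<in> hom (ZOr_grp P) (ZOr_grp P)" by (rule homI) (simp_all add: ZOr_grp_def)
  have homcomp: "(\<lambda>c. ZOr_pw P m (ZOr_pw P n c)) \<in> hom (ZOr_grp P) (ZOr_grp P)" for m n
    by (rule homI) (simp_all add: ZOr_pw_carrier[OF P] ZOr_pw_keys[OF P] ZOr_pw_add ZOr_grp_def)
  have F1: "(0::'a set \<Rightarrow>\<^sub>0 int) \<in> ?C" by (simp add: ZOr_grp_def)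
  have F4: "ZOr_pw P 1 c = c" if "c \<in> ?C" for c
    by (rule ZOr_ext[OF P grp ZOr_pw_hom[OF P] homid _ that])
       (simp add: pw_eta[OF P] pqD(4)[OF P])
  have F5: "ZOr_pw P m (ZOr_pw P n c) = ZOr_pw P (m * n) c" if "c \<in> ?C" for m n c
    by (rule ZOr_ext[OF P grp homcomp ZOr_pw_hom[OF P] _ that])
       (simp add: pw_eta[OF P] pqD(3,5)[OF P])
  have F6: "ZOr_pw P 0 c = 0" if "c \<in> ?C" for c
    by (rule ZOr_ext[OF P grp ZOr_pw_hom[OF P] hom0 _ that])
       (simp add: pw_eta[OF P] pqD(6)[OF P] eta_e)
  have F7: "lam_iter (ZOr_pq P) a n b = b" if "b \<in> ?C" for a n b
    using that by (simp add: lam_iter_def ZOr_pq_def funpow_idlam funpow_inv_idlam)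
  have F3: "bij_betw (\<lambda>y. y) ?C ?C" by (simp add: bij_betw_def)
  show ?thesis
    unfolding power_quandle_def Let_def
    using F1 F3 F4 F5 F6 F7 ZOr_pw_carrier[OF P]
    by (simp add: ZOr_pq_def)
qed

lemma ZOr_abgrp_obj:
  assumes P: "power_quandle P"
  shows "abgrp_obj (ZOr_pq P) (ZOr_grp P)"
  unfolding abgrp_obj_def
  using ZOr_power_quandle[OF P] abelian_free_Abelian_group[of "ZOr_gens P"]
  by (simp add: ZOr_pq_def ZOr_grp_def ZOr_pw_add)

lemma eta_pq_hom:
  assumes P: "power_quandle P"
  shows "pq_hom P (ZOr_pq P) (ZOr_eta P)"
proof -
  have "ZOr_eta P (pq_rhd P a b) = ZOr_eta P b" if "a \<in> pq_carrier P" "b \<in> pq_carrier P" for a b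
    using orb_rel_rhd[OF that] by (simp add: ZOr_eta_def orbit_eq_iff[symmetric])
  then show ?thesis
    unfolding pq_hom_def ZOr_pq_def pq.simps
    using eta_carrier[of _ P] pw_eta[OF P] eta_e[of P] by auto
qed

lemma abgrp_triv:
  assumes Q: "abgrp_obj Q H" and x: "x \<in> pq_carrier Q" and y: "y \<in> pq_carrier Q"
  shows "pq_rhd Q x y = y"
proof -
  have PQ: "power_quandle Q" and G: "comm_group H" and cH: "carrier H = pq_carrier Q"
    and one: "\<one>\<^bsub>H\<^esub> = pq_e Q"
    and hm: "\<And>x x' y y'. x \<in> pq_carrier Q \<Longrightarrow> x' \<in> pq_carrier Q \<Longrightarrow> y \<in> pq_carrier Q \<Longrightarrow> y' \<in> pq_carrier Q \<Longrightarrow>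
        pq_rhd Q (x \<otimes>\<^bsub>H\<^esub> x') (y \<otimes>\<^bsub>H\<^esub> y') = pq_rhd Q x y \<otimes>\<^bsub>H\<^esub> pq_rhd Q x' y'"
    using Q unfolding abgrp_obj_def by blast+
  interpret comm_group H by (rule G)
  have e: "pq_e Q \<in> pq_carrier Q" using pqD(1)[OF PQ] .
  have "pq_rhd Q x y = pq_rhd Q (x \<otimes>\<^bsub>H\<^esub> pq_e Q) (pq_e Q \<otimes>\<^bsub>H\<^esub> y)"
    using x y cH one by (metis r_one l_one)
  also have "\<dots> = pq_rhd Q x (pq_e Q) \<otimes>\<^bsub>H\<^esub> pq_rhd Q (pq_e Q) y"
    using hm x y e by blast
  also have "\<dots> = y" using pqD(8,9)[OF PQ] x y cH one by (metis l_one)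
  finally show ?thesis .
qed

theorem mainTheorem3:
  fixes P :: "'a pq"
  assumes "power_quandle P"
  shows "abgrp_obj (ZOr_pq P) (ZOr_grp P)
       \<and> pq_hom P (ZOr_pq P) (ZOr_eta P)
       \<and> (\<forall>(Q :: 'b pq) (H :: 'b monoid) f.
            abgrp_obj Q H \<and> pq_hom P Q f \<longrightarrow>
              (\<exists>g. abgrp_obj_hom (ZOr_pq P) (ZOr_grp P) Q H g
                   \<and> (\<forall>a\<in>pq_carrier P. g (ZOr_eta P a) = f a))
            \<and> (\<forall>g g'. abgrp_obj_hom (ZOr_pq P) (ZOr_grp P) Q H g
                   \<and> (\<forall>a\<in>pq_carrier P. g (ZOr_eta P a) = f a)
                   \<and> abgrp_obj_hom (ZOr_pq P) (ZOr_grp P) Q H g'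
                   \<and> (\<forall>a\<in>pq_carrier P. g' (ZOr_eta P a) = f a)
                   \<longrightarrow> (\<forall>x\<in>carrier (ZOr_grp P). g x = g' x)))"
proof (intro conjI allI impI)
  note P = assms
  show "abgrp_obj (ZOr_pq P) (ZOr_grp P)" by (rule ZOr_abgrp_obj[OF P])
  show "pq_hom P (ZOr_pq P) (ZOr_eta P)" by (rule eta_pq_hom[OF P])
  fix Q :: "'b pq" and H :: "'b monoid" and f
  assume "abgrp_obj Q H \<and> pq_hom P Q f"
  then have Q: "abgrp_obj Q H" and f: "pq_hom P Q f" by blast+
  have PQ: "power_quandle Q" and G: "comm_group H" and cH: "carrier H = pq_carrier Q"
    and one: "\<one>\<^bsub>H\<^esub> = pq_e Q"
    and pwm: "\<And>n x y. x \<in> pq_carrier Q \<Longrightarrow> y \<in> pq_carrier Q \<Longrightarrow>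
        pq_pw Q n (x \<otimes>\<^bsub>H\<^esub> y) = pq_pw Q n x \<otimes>\<^bsub>H\<^esub> pq_pw Q n y"
    using Q unfolding abgrp_obj_def by blast+
  have grpH: "group H" using G by (simp add: comm_group_def)
  have fC: "\<And>a. a \<in> pq_carrier P \<Longrightarrow> f a \<in> pq_carrier Q"
    and frhd: "\<And>a b. a \<in> pq_carrier P \<Longrightarrow> b \<in> pq_carrier P \<Longrightarrow> f (pq_rhd P a b) = pq_rhd Q (f a) (f b)"
    and fpw: "\<And>n a. a \<in> pq_carrier P \<Longrightarrow> f (pq_pw P n a) = pq_pw Q n (f a)"
    and fe: "f (pq_e P) = pq_e Q"
    using f unfolding pq_hom_def by blast+
  have frhd': "f (pq_rhd P a b) = f b" if "a \<in> pq_carrier P" "b \<in> pq_carrier P" for a b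
    using frhd[OF that] abgrp_triv[OF Q fC[OF that(1)] fC[OF that(2)]] by simp
  have forb: "f a = f b" if "(a, b) \<in> orb_rel P" "a \<in> pq_carrier P" for a b
    using that unfolding orb_rel_def
  proof (induction rule: rtrancl_induct)
    case (step y z)
    have yC: "y \<in> pq_carrier P" using orb_rel_carrier[OF P] step unfolding orb_rel_def by blast
    have "f y = f z" using step(2)
    proof
      assume "(y, z) \<in> orb_gen P"
      then obtain x where x: "x \<in> pq_carrier P" "z \<in> pq_carrier P" "y = pq_rhd P x z"
        unfolding orb_gen_def by blast
      then show ?thesis using frhd' by simp
    next
      assume "(y, z) \<in> (orb_gen P)\<inverse>"
      then obtain x where x: "x \<in> pq_carrier P" "y \<in> pq_carrier P" "z = pq_rhd P x y"
        unfolding orb_gen_def by blast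
      then show ?thesis using frhd' by simp
    qed
    then show ?case using step by simp
  qed simp
  define rep where "rep X = (SOME a. a \<in> X \<inter> pq_carrier P)" for X :: "'a set"
  have rep: "rep (orbit P a) \<in> orbit P a \<inter> pq_carrier P" "(a, rep (orbit P a)) \<in> orb_rel P"
    if "a \<in> pq_carrier P" for a
    using orbit_rep[OF P that] orbit_rep_rel[OF P that] unfolding rep_def by auto
  have img: "(\<lambda>X. f (rep X)) ` ZOr_gens P \<subseteq> carrier H"
  proof
    fix y assume "y \<in> (\<lambda>X. f (rep X)) ` ZOr_gens P"
    then obtain X where X: "X \<in> ZOr_gens P" "y = f (rep X)" by blast
    then obtain a where "a \<in> pq_carrier P" "X = orbit P a" using gens_rep by blast
    then show "y \<in> carrier H" using X rep fC cH by blast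
  qed
  obtain h where h: "h \<in> hom (free_Abelian_group (ZOr_gens P)) H"
    "\<And>X. X \<in> ZOr_gens P \<Longrightarrow> h (frag_of X) = f (rep X)"
    using comm_group.free_Abelian_group_universal[OF G img] by blast
  have hZ: "h \<in> hom (ZOr_grp P) H" using h(1) by (simp add: ZOr_grp_def)
  have h0: "h 0 = pq_e Q"
    using hom_one[OF h(1) group_free_Abelian_group grpH] one by simp
  have heta: "h (ZOr_eta P a) = f a" if a: "a \<in> pq_carrier P" for a
  proof (cases "orbit P a = orbit P (pq_e P)")
    case True
    then have "(a, pq_e P) \<in> orb_rel P" by (simp add: orbit_eq_iff)
    then have "f a = pq_e Q" using forb a fe by simp
    then show ?thesis using True h0 by (simp add: ZOr_eta_def ZOr_gen_def)
  next
    case False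
    then have "orbit P a \<in> ZOr_gens P" using a by (simp add: ZOr_gens_def Orbits_def)
    then have "h (frag_of (orbit P a)) = f (rep (orbit P a))" by (rule h(2))
    also have "\<dots> = f a" using forb[OF rep(2)[OF a] a] by simp
    finally show ?thesis using False by (simp add: ZOr_eta_def ZOr_gen_def)
  qed
  show "\<exists>g. abgrp_obj_hom (ZOr_pq P) (ZOr_grp P) Q H g \<and> (\<forall>a\<in>pq_carrier P. g (ZOr_eta P a) = f a)"
  proof (intro exI conjI ballI)
    show "h (ZOr_eta P a) = f a" if "a \<in> pq_carrier P" for a using heta[OF that] .
    have hC: "h c \<in> pq_carrier Q" if "c \<in> carrier (ZOr_grp P)" for c
      using hom_in_carrier[OF hZ that] cH by simp
    have pwQhom: "pq_pw Q n \<in> hom H H" for n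
      by (rule homI) (simp_all add: cH pqD(3)[OF PQ] pwm)
    have hpw: "h (ZOr_pw P n c) = pq_pw Q n (h c)" if c: "c \<in> carrier (ZOr_grp P)" for n c
    proof (rule ZOr_ext[OF P grpH _ _ _ c])
      show "(\<lambda>c. h (ZOr_pw P n c)) \<in> hom (ZOr_grp P) H"
      proof (rule homI)
        fix x assume "x \<in> carrier (ZOr_grp P)"
        then show "h (ZOr_pw P n x) \<in> carrier H"
          using hom_in_carrier[OF hZ] ZOr_pw_carrier[OF P] by blast
      next
        fix x y assume xy: "x \<in> carrier (ZOr_grp P)" "y \<in> carrier (ZOr_grp P)"
        have m: "u \<otimes>\<^bsub>ZOr_grp P\<^esub> v = u + v" for u v by (simp add: ZOr_grp_def)
        show "h (ZOr_pw P n (x \<otimes>\<^bsub>ZOr_grp P\<^esub> y)) = h (ZOr_pw P n x) \<otimes>\<^bsub>H\<^esub> h (ZOr_pw P n y)"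
          using hom_mult[OF hZ ZOr_pw_carrier[OF P xy(1)] ZOr_pw_carrier[OF P xy(2)], of n n]
          by (simp add: m ZOr_pw_add)
      qed
      show "(\<lambda>c. pq_pw Q n (h c)) \<in> hom (ZOr_grp P) H"
        by (rule homI) (simp_all add: hom_in_carrier[OF hZ] hom_in_carrier[OF pwQhom] hom_mult[OF hZ] hom_mult[OF pwQhom])
      fix a assume a: "a \<in> pq_carrier P"
      show "h (ZOr_pw P n (ZOr_eta P a)) = pq_pw Q n (h (ZOr_eta P a))"
        using pw_eta[OF P a] heta a pqD(3)[OF P a] fpw by simp
    qed
    show "abgrp_obj_hom (ZOr_pq P) (ZOr_grp P) Q H h"
      unfolding abgrp_obj_hom_def pq_hom_def
      using hZ hC hpw h0 abgrp_triv[OF Q] by (simp add: ZOr_pq_def)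
  qed
  fix g g'
  assume A: "abgrp_obj_hom (ZOr_pq P) (ZOr_grp P) Q H g
                   \<and> (\<forall>a\<in>pq_carrier P. g (ZOr_eta P a) = f a)
                   \<and> abgrp_obj_hom (ZOr_pq P) (ZOr_grp P) Q H g'
                   \<and> (\<forall>a\<in>pq_carrier P. g' (ZOr_eta P a) = f a)"
  show "\<forall>x\<in>carrier (ZOr_grp P). g x = g' x"
  proof
    fix x assume x: "x \<in> carrier (ZOr_grp P)"
    show "g x = g' x"
      by (rule ZOr_ext[OF P grpH _ _ _ x]) (use A in \<open>auto simp: abgrp_obj_hom_def\<close>)
  qed
qed

end
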